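(* Let $m\ge 1$, $p\ge 2$, let $a_1,\dots,a_p\in\mathbb C$, and let $b_{j,k}\in\mathbb C\setminus\{0,-1,-2,\dots\}$ for $1\le j\le p-1$, $1\le k\le m$. Then the series $F_C^{p,m}(a,B;x)$ converges absolutely at every point of $$\mathbb D=\{x\in\mathbb C^m \mid \sqrt[p]{|x_1|}+\cdots+\sqrt[p]{|x_m|}<1\}.$$
   Context: Pochhammer's symbol: $(\alpha,n)=\alpha(\alpha+1)\cdots(\alpha+n-1)=\Gamma(\alpha+n)/\Gamma(\alpha)$, $\mathbb N=\{0,1,2,\dots\}$. Parameters: $a={}^t(a_1,\dots,a_p)$ and $B=(b_{j,k})_{1\le j\le p,\,1\le k\le m}$ with the convention $b_{p,k}=1$ for all $k$. The series is $$F_C^{p,m}(a,B;x)=\sum_{(n_1,\dots,n_m)\in\mathbb N^m}\frac{(a_1,n_1+\cdots+n_m)\cdots(a_p,n_1+\cdots+n_m)}{\prod_{k=1}^m\{(b_{1,k},n_k)\cdots(b_{p-1,k},n_k)\,n_k!\}}x_1^{n_1}\cdots x_m^{n_m}.$$ *)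

theory Defs
  imports "HOL-Analysis.Analysis"
begin

text \<open>Multi-indices (n_1,...,n_m) in N^m, represented as functions nat => nat
  supported in {1..m}.\<close>
definition multi_idx :: "nat \<Rightarrow> (nat \<Rightarrow> nat) set" where
  "multi_idx m = {n. \<forall>k. k \<notin> {1..m} \<longrightarrow> n k = 0}"

text \<open>General term of F_C^{p,m}(a,B;x). Parameters a j (1<=j<=p),
  b j k (1<=j<=p-1, 1<=k<=m; the convention b_{p,k}=1 is built in via n_k!),
  x k (1<=k<=m).\<close>
definition FC_term :: "nat \<Rightarrow> nat \<Rightarrow> (nat \<Rightarrow> complex) \<Rightarrow> (nat \<Rightarrow> nat \<Rightarrow> complex)
    \<Rightarrow> (nat \<Rightarrow> complex) \<Rightarrow> (nat \<Rightarrow> nat) \<Rightarrow> complex" where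
  "FC_term p m a b x n =
     (\<Prod>j=1..p. pochhammer (a j) (\<Sum>k=1..m. n k)) /
     (\<Prod>k=1..m. (\<Prod>j=1..p-1. pochhammer (b j k) (n k)) * fact (n k))
     * (\<Prod>k=1..m. x k ^ n k)"

definition FC_domain :: "nat \<Rightarrow> nat \<Rightarrow> (nat \<Rightarrow> complex) set" where
  "FC_domain p m = {x. (\<Sum>k=1..m. root p (cmod (x k))) < 1}"

end

theory Submission
  imports Defs "HOL-Library.FuncSet"
begin


lemma growth_a:
  fixes a :: complex and \<theta> :: real
  assumes th: "\<theta> > 1"
  shows "\<exists>C>0. \<forall>N. norm (pochhammer a N) \<le> C * fact N * \<theta>^N"
proof -
  define f where "f N = norm (pochhammer a N) / (fact N * \<theta>^N)" for N
  define c where "c = (1 + 1/\<theta>)/2"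
  have c1: "c < 1" using th by (simp add: c_def field_simps)
  define d where "d = c*\<theta> - 1"
  have d0: "d > 0" using th by (simp add: d_def c_def field_simps)
  define N0 where "N0 = nat \<lceil>norm a / d\<rceil>"
  have step: "norm (f (Suc n)) \<le> c * norm (f n)" if "n \<ge> N0" for n
  proof -
    have fs: "f (Suc n) = f n * (norm (a + of_nat n) / ((real n + 1) * \<theta>))"
    proof -
      have "norm (pochhammer a (Suc n)) = norm (pochhammer a n) * norm (a + of_nat n)"
        by (simp only: pochhammer_Suc norm_mult)
      thus ?thesis using th by (simp add: f_def field_simps)
    qed
    have "norm a / d \<le> real n" using that unfolding N0_def by linarith
    hence "norm a \<le> d * real n" using d0 by (simp add: field_simps)
    hence "norm (a + of_nat n) \<le> c*\<theta>*(real n + 1)"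
      using norm_triangle_ineq[of a "of_nat n"] d0 unfolding d_def by (simp add: algebra_simps)
    moreover have D: "(real n + 1) * \<theta> > 0" using th by simp
    ultimately have r: "norm (a + of_nat n) / ((real n + 1) * \<theta>) \<le> c"
      by (subst pos_divide_le_eq[OF D]) (simp add: algebra_simps)
    have f0: "f n \<ge> 0" unfolding f_def using th by (intro divide_nonneg_nonneg) auto
    have "f (Suc n) \<ge> 0" unfolding f_def using th by (intro divide_nonneg_nonneg) auto
    then have "norm (f (Suc n)) = f (Suc n)" by simp
    also have "\<dots> \<le> f n * c" unfolding fs by (rule mult_left_mono[OF r f0])
    also have "\<dots> = c * norm (f n)" using f0 by simp
    finally show ?thesis .
  qed
  have "summable f" by (rule summable_ratio_test[where f=f and N=N0, OF c1 step])
  hence "f \<longlonglongrightarrow> 0" by (rule summable_LIMSEQ_zero)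
  hence "Bseq f" by (intro convergent_imp_Bseq convergentI)
  then obtain K where K: "K > 0" "\<And>N. norm (f N) \<le> K" by (auto elim: BseqE)
  have "norm (pochhammer a N) \<le> K * fact N * \<theta>^N" for N
  proof -
    have p: "fact N * \<theta>^N > 0" using th by simp
    have "f N \<le> K" using K(2)[of N] by simp
    thus ?thesis using p unfolding f_def by (simp add: field_simps)
  qed
  thus ?thesis using K by blast
qed

lemma growth_b:
  fixes b :: complex and \<theta> :: real
  assumes th: "\<theta> > 1" and b: "\<And>l::nat. b \<noteq> - of_nat l"
  shows "\<exists>C>0. \<forall>n. fact n \<le> C * \<theta>^n * norm (pochhammer b n)"
proof -
  have nz: "pochhammer b n \<noteq> 0" for n using b by (auto simp: pochhammer_eq_0_iff)
  have nz1: "b + of_nat n \<noteq> 0" for n using b[of n] by (auto simp: add_eq_0_iff2)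
  define f where "f n = fact n / (\<theta>^n * norm (pochhammer b n))" for n
  define c where "c = (1 + 1/\<theta>)/2"
  have c1: "c < 1" using th by (simp add: c_def field_simps)
  define d where "d = c*\<theta> - 1"
  have d0: "d > 0" using th by (simp add: d_def c_def field_simps)
  define N0 where "N0 = nat \<lceil>(1 + c*\<theta>*norm b) / d\<rceil>"
  have step: "norm (f (Suc n)) \<le> c * norm (f n)" if "n \<ge> N0" for n
  proof -
    have fs: "f (Suc n) = f n * ((real n + 1) / (\<theta> * norm (b + of_nat n)))"
    proof -
      have "norm (pochhammer b (Suc n)) = norm (pochhammer b n) * norm (b + of_nat n)"
        by (simp only: pochhammer_Suc norm_mult)
      thus ?thesis using th nz[of n] nz1[of n] by (simp add: f_def field_simps)
    qed
    have "(1 + c*\<theta>*norm b) / d \<le> real n" using that unfolding N0_def by linarith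
    hence "1 + c*\<theta>*norm b \<le> d * real n" using d0 by (simp add: field_simps)
    moreover have "real n - norm b \<le> norm (b + of_nat n)"
      using norm_diff_ineq[of "of_nat n :: complex" b] by (simp add: add.commute)
    ultimately have "real n + 1 \<le> c*\<theta>*norm (b + of_nat n)"
    proof -
      have ct: "c*\<theta> > 0" using d0 unfolding d_def by simp
      have "real n + 1 \<le> c*\<theta>*(real n - norm b)"
        using \<open>1 + c*\<theta>*norm b \<le> d * real n\<close> unfolding d_def by (simp add: algebra_simps)
      also have "\<dots> \<le> c*\<theta>*norm (b + of_nat n)"
        using mult_left_mono[OF \<open>real n - norm b \<le> norm (b + of_nat n)\<close>] ct by simp
      finally show ?thesis .
    qed
    hence r: "(real n + 1) / (\<theta> * norm (b + of_nat n)) \<le> c"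
      using th nz1[of n] by (simp add: field_simps)
    have f0: "f n \<ge> 0" unfolding f_def using th by (intro divide_nonneg_nonneg) auto
    have "f (Suc n) \<ge> 0" unfolding f_def using th by (intro divide_nonneg_nonneg) auto
    then have "norm (f (Suc n)) = f (Suc n)" by simp
    also have "\<dots> \<le> f n * c" unfolding fs by (rule mult_left_mono[OF r f0])
    also have "\<dots> = c * norm (f n)" using f0 by simp
    finally show ?thesis .
  qed
  have "summable f" by (rule summable_ratio_test[where f=f and N=N0, OF c1 step])
  hence "f \<longlonglongrightarrow> 0" by (rule summable_LIMSEQ_zero)
  hence "Bseq f" by (intro convergent_imp_Bseq convergentI)
  then obtain K where K: "K > 0" "\<And>N. norm (f N) \<le> K" by (auto elim: BseqE)
  have "fact n \<le> K * \<theta>^n * norm (pochhammer b n)" for n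
  proof -
    have p: "\<theta>^n * norm (pochhammer b n) > 0" using th nz[of n] by simp
    have "f n \<le> K" using K(2)[of n] by simp
    thus ?thesis using p unfolding f_def by (simp add: field_simps)
  qed
  thus ?thesis using K by blast
qed


lemma fact_binom_split: "(fact (a + b) :: real) = of_nat ((a + b) choose a) * fact a * fact b"
proof -
  have "fact a * fact (a + b - a) * ((a + b) choose a) = fact (a + b)"
    by (rule binomial_fact_lemma) simp
  hence "(fact (a + b) :: real) = of_nat (fact a * fact b * ((a + b) choose a))" by simp
  thus ?thesis by (simp add: algebra_simps)
qed

lemma multinom_le:
  fixes r :: "'a \<Rightarrow> real" and n :: "'a \<Rightarrow> nat"
  assumes "finite K" "\<And>k. k \<in> K \<Longrightarrow> r k \<ge> 0"
  shows "fact (\<Sum>k\<in>K. n k) * (\<Prod>k\<in>K. r k ^ n k) \<le> (\<Sum>k\<in>K. r k) ^ (\<Sum>k\<in>K. n k) * (\<Prod>k\<in>K. fact (n k))"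
  using assms
proof (induction K rule: finite_induct)
  case empty
  then show ?case by simp
next
  case (insert i K)
  define N' where "N' = (\<Sum>k\<in>K. n k)"
  define S' where "S' = (\<Sum>k\<in>K. r k)"
  define P where "P = (\<Prod>k\<in>K. r k ^ n k)"
  define F where "F = (\<Prod>k\<in>K. fact (n k) :: real)"
  have IH: "fact N' * P \<le> S' ^ N' * F" using insert unfolding N'_def S'_def P_def F_def by auto
  have ri: "r i \<ge> 0" using insert by auto
  have S'0: "S' \<ge> 0" unfolding S'_def using insert by (auto intro: sum_nonneg)
  have F0: "F \<ge> 0" unfolding F_def by (auto intro: prod_nonneg)
  have fe: "(fact (n i + N') :: real) = of_nat ((n i + N') choose n i) * fact (n i) * fact N'"
    by (rule fact_binom_split)
  have bt: "of_nat ((n i + N') choose n i) * r i ^ n i * S' ^ N' \<le> (r i + S') ^ (n i + N')"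
  proof -
    have "(r i + S') ^ (n i + N') = (\<Sum>k\<le>n i + N'. of_nat ((n i + N') choose k) * r i ^ k * S' ^ (n i + N' - k))"
      by (rule binomial_ring)
    also have "\<dots> \<ge> of_nat ((n i + N') choose n i) * r i ^ n i * S' ^ (n i + N' - n i)"
      by (rule member_le_sum) (use ri S'0 in auto)
    finally show ?thesis by simp
  qed
  have "fact (\<Sum>k\<in>insert i K. n k) * (\<Prod>k\<in>insert i K. r k ^ n k)
      = fact (n i + N') * (r i ^ n i * P)"
    using insert unfolding N'_def P_def by simp
  also have "\<dots> = of_nat ((n i + N') choose n i) * r i ^ n i * fact (n i) * (fact N' * P)"
    unfolding fe by (simp add: mult_ac)
  also have "\<dots> \<le> of_nat ((n i + N') choose n i) * r i ^ n i * fact (n i) * (S' ^ N' * F)"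
    by (rule mult_left_mono[OF IH]) (use ri in auto)
  also have "\<dots> = (of_nat ((n i + N') choose n i) * r i ^ n i * S' ^ N') * (fact (n i) * F)"
    by (simp add: algebra_simps)
  also have "\<dots> \<le> (r i + S') ^ (n i + N') * (fact (n i) * F)"
    by (rule mult_right_mono[OF bt]) (use F0 in auto)
  also have "\<dots> = (\<Sum>k\<in>insert i K. r k) ^ (\<Sum>k\<in>insert i K. n k) * (\<Prod>k\<in>insert i K. fact (n k))"
    using insert unfolding N'_def S'_def F_def by simp
  finally show ?case .
qed

lemma geom_multi_summable:
  fixes q :: real and m :: nat
  assumes q0: "0 \<le> q" and q1: "q < 1"
  shows "(\<lambda>n. \<Prod>k\<in>{1..m}. q ^ n k) summable_on {n. \<forall>k. k \<notin> {1..m} \<longrightarrow> n k = 0}"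
    (is "?g summable_on ?M")
proof (rule nonneg_bdd_above_summable_on)
  show "\<And>x. x \<in> ?M \<Longrightarrow> 0 \<le> ?g x" using q0 by (auto intro: prod_nonneg)
  show "bdd_above (sum ?g ` {F. F \<subseteq> ?M \<and> finite F})"
  proof (rule bdd_aboveI2)
    fix F assume F: "F \<in> {F. F \<subseteq> ?M \<and> finite F}"
    hence FM: "F \<subseteq> ?M" and fF: "finite F" by auto
    define K where "K = (\<Sum>n\<in>F. \<Sum>k\<in>{1..m}. n k)"
    define h where "h n = restrict n {1..m}" for n :: "nat \<Rightarrow> nat"
    have inj: "inj_on h F"
    proof (rule inj_onI)
      fix u v assume uv: "u \<in> F" "v \<in> F" "h u = h v"
      show "u = v"
      proof
        fix k show "u k = v k"
        proof (cases "k \<in> {1..m}")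
          case True then show ?thesis using uv(3) unfolding h_def by (metis restrict_apply')
        next
          case False
          have "u \<in> ?M" "v \<in> ?M" using uv FM by auto
          thus ?thesis using False by (simp del: atLeastAtMost_iff)
        qed
      qed
    qed
    have gh: "?g n = ?g (h n)" for n unfolding h_def by (intro prod.cong) auto
    have "sum ?g F = sum ?g (h ` F)"
      by (subst sum.reindex[OF inj]) (use gh in \<open>auto intro: sum.cong\<close>)
    also have "\<dots> \<le> sum ?g (PiE {1..m} (\<lambda>_. {..K}))"
    proof (rule sum_mono2)
      show "finite (PiE {1..m} (\<lambda>_. {..K}))" by (rule finite_PiE) auto
      show "h ` F \<subseteq> PiE {1..m} (\<lambda>_. {..K})"
      proof
        fix y assume "y \<in> h ` F"
        then obtain n where n: "n \<in> F" "y = h n" by auto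
        have "n k \<le> K" if "k \<in> {1..m}" for k
        proof -
          have "n k \<le> (\<Sum>k\<in>{1..m}. n k)" by (rule member_le_sum) (use that in auto)
          also have "\<dots> \<le> K" unfolding K_def by (rule member_le_sum) (use n fF in auto)
          finally show ?thesis .
        qed
        thus "y \<in> PiE {1..m} (\<lambda>_. {..K})" unfolding n h_def by auto
      qed
      show "\<And>b. b \<in> PiE {1..m} (\<lambda>_. {..K}) - h ` F \<Longrightarrow> 0 \<le> ?g b"
        using q0 by (auto intro: prod_nonneg)
    qed
    also have "\<dots> = (\<Prod>k\<in>{1..m}. \<Sum>i\<in>{..K}. q ^ i)"
      by (rule prod_sum_PiE[symmetric]) auto
    also have "\<dots> \<le> (\<Prod>k\<in>{1..m}. 1/(1-q))"
    proof (rule prod_mono)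
      fix k assume "k \<in> {1..m}"
      have "(\<Sum>i\<in>{..K}. q ^ i) \<le> suminf (\<lambda>i. q^i)"
        by (rule sum_le_suminf) (use q0 q1 in \<open>auto intro: summable_geometric\<close>)
      also have "\<dots> = 1/(1-q)" using q0 q1 by (simp add: suminf_geometric)
      finally show "0 \<le> (\<Sum>i\<in>{..K}. q ^ i) \<and> (\<Sum>i\<in>{..K}. q ^ i) \<le> 1/(1-q)"
        using q0 by (auto intro: sum_nonneg)
    qed
    finally show "sum ?g F \<le> (\<Prod>k\<in>{1..m}. 1/(1-q))" .
  qed
qed


theorem mainTheorem1:
  fixes m p :: nat and a :: "nat \<Rightarrow> complex" and b :: "nat \<Rightarrow> nat \<Rightarrow> complex"
    and x :: "nat \<Rightarrow> complex"
  assumes "m \<ge> 1" and "p \<ge> 2"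
    and "\<And>j k (l::nat). j \<in> {1..p-1} \<Longrightarrow> k \<in> {1..m} \<Longrightarrow> b j k \<noteq> - of_nat l"
    and "x \<in> FC_domain p m"
  shows "(\<lambda>n. norm (FC_term p m a b x n)) summable_on multi_idx m"
proof -
  define r where "r k = root p (cmod (x k))" for k
  define s where "s = (\<Sum>k=1..m. r k)"
  have p0: "p > 0" using assms(2) by simp
  have r0: "r k \<ge> 0" for k unfolding r_def by (simp add: real_root_ge_zero)
  have s1: "s < 1" using assms(4) unfolding FC_domain_def s_def r_def by simp
  have s0: "s \<ge> 0" unfolding s_def using r0 by (simp add: sum_nonneg)
  have xr: "cmod (x k) = r k ^ p" for k unfolding r_def using p0 by simp
  define t where "t = s ^ p"
  have t0: "0 \<le> t" unfolding t_def using s0 by simp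
  have t1: "t < 1" unfolding t_def using power_strict_mono[OF s1 s0 p0] by simp
  define e where "e = 2 * p - 1"
  have e0: "e > 0" unfolding e_def using assms(2) by simp
  have epe: "p + (p - 1) = e" unfolding e_def using assms(2) by simp
  define \<theta> where "\<theta> = root e (2/(1+t))"
  have th1: "\<theta> > 1"
  proof -
    have "root e 1 < root e (2/(1+t))" using e0 t0 t1 by simp
    thus ?thesis unfolding \<theta>_def using e0 by simp
  qed
  have the: "\<theta> ^ e = 2/(1+t)" unfolding \<theta>_def using e0 t0 by simp
  define Q where "Q = \<theta>^e * t"
  have Q0: "0 \<le> Q" unfolding Q_def using th1 t0 by simp
  have Q1: "Q < 1" unfolding Q_def the using t0 t1 by (simp add: field_simps)
  define Ca where "Ca j = (SOME C. C > 0 \<and> (\<forall>N. norm (pochhammer (a j) N) \<le> C * fact N * \<theta>^N))" for j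
  have Ca: "Ca j > 0 \<and> (\<forall>N. norm (pochhammer (a j) N) \<le> Ca j * fact N * \<theta>^N)" for j
    unfolding Ca_def by (rule someI_ex) (rule growth_a[OF th1])
  define Cb where "Cb j k = (SOME C. C > 0 \<and> (\<forall>n. fact n \<le> C * \<theta>^n * norm (pochhammer (b j k) n)))" for j k
  have Cb: "Cb j k > 0 \<and> (\<forall>n. fact n \<le> Cb j k * \<theta>^n * norm (pochhammer (b j k) n))"
    if "j \<in> {1..p-1}" "k \<in> {1..m}" for j k
    unfolding Cb_def by (rule someI_ex) (rule growth_b[OF th1 assms(3)[OF that]])
  define CA where "CA = (\<Prod>j=1..p. Ca j)"
  define CBk where "CBk k = (\<Prod>j=1..p-1. Cb j k)" for k
  define CB where "CB = (\<Prod>k=1..m. CBk k)"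
  have CA0: "CA > 0" unfolding CA_def using Ca by (intro prod_pos) auto
  have CBk0: "CBk k > 0" if "k \<in> {1..m}" for k unfolding CBk_def using Cb that by (intro prod_pos) auto
  have CB0: "CB > 0" unfolding CB_def using CBk0 by (intro prod_pos) auto
  define C where "C = CA * CB"
  have bound: "norm (FC_term p m a b x n) \<le> C * (\<Prod>k=1..m. Q ^ n k)" for n
  proof -
    define N where "N = (\<Sum>k=1..m. n k)"
    define Pb where "Pb k = (\<Prod>j=1..p-1. norm (pochhammer (b j k) (n k)))" for k
    have Pb0: "Pb k \<ge> 0" for k unfolding Pb_def by (simp add: prod_nonneg)
    have normT: "norm (FC_term p m a b x n) = (\<Prod>j=1..p. norm (pochhammer (a j) N)) *
        (\<Prod>k=1..m. norm (x k) ^ n k / (Pb k * fact (n k)))"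
      unfolding FC_term_def N_def Pb_def
      by (simp add: norm_mult norm_divide prod_norm[symmetric] norm_power prod_dividef prod.distrib)
    have A: "(\<Prod>j=1..p. norm (pochhammer (a j) N)) \<le> CA * fact N ^ p * (\<theta>^N)^p"
    proof -
      have "(\<Prod>j=1..p. norm (pochhammer (a j) N)) \<le> (\<Prod>j=1..p. Ca j * (fact N * \<theta>^N))"
        by (rule prod_mono) (use Ca in \<open>auto simp: mult.assoc\<close>)
      also have "\<dots> = CA * (fact N * \<theta>^N)^p" unfolding CA_def by (simp add: prod.distrib)
      finally show ?thesis by (simp add: power_mult_distrib mult.assoc)
    qed
    have Bk: "norm (x k) ^ n k / (Pb k * fact (n k)) \<le> CBk k * (\<theta>^(n k))^(p-1) * (r k ^ n k / fact (n k))^p"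
      if k: "k \<in> {1..m}" for k
    proof -
      define L where "L = (\<Prod>j=1..p-1. fact (n k) / (Cb j k * \<theta>^(n k)))"
      have LP: "L \<le> Pb k" unfolding L_def Pb_def
      proof (rule prod_mono)
        fix j assume j: "j \<in> {1..p-1}"
        have c: "Cb j k * \<theta>^(n k) > 0" using Cb[OF j k] th1 by simp
        have "fact (n k) \<le> Cb j k * \<theta>^(n k) * norm (pochhammer (b j k) (n k))" using Cb[OF j k] by blast
        then show "0 \<le> fact (n k) / (Cb j k * \<theta>^(n k)) \<and>
            fact (n k) / (Cb j k * \<theta>^(n k)) \<le> norm (pochhammer (b j k) (n k))"
          using c by (simp add: pos_divide_le_eq mult.commute)
      qed
      have Leq: "L = fact (n k) ^ (p-1) / (CBk k * (\<theta>^(n k))^(p-1))"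
        unfolding L_def CBk_def by (simp add: prod_dividef prod.distrib)
      have L0: "L > 0" unfolding Leq using CBk0[OF k] th1 by simp
      have "norm (x k) ^ n k / (Pb k * fact (n k)) \<le> norm (x k) ^ n k / (L * fact (n k))"
        by (rule divide_left_mono) (use LP L0 in auto)
      also have "\<dots> = CBk k * (\<theta>^(n k))^(p-1) * (r k ^ n k / fact (n k))^p"
      proof -
        have "norm (x k) ^ n k = (r k ^ n k) ^ p" unfolding xr by (simp add: power_mult[symmetric] mult.commute)
        moreover have "fact (n k) ^ (p-1) * fact (n k) = (fact (n k) :: real) ^ p"
          using p0 by (metis Suc_diff_1 power_Suc2)
        ultimately show ?thesis unfolding Leq using CBk0[OF k] th1
          by (simp add: field_simps power_divide)
      qed
      finally show ?thesis .
    qed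
    define R where "R = (\<Prod>k=1..m. r k ^ n k)"
    define F where "F = (\<Prod>k=1..m. fact (n k) :: real)"
    have F0: "F > 0" unfolding F_def by (simp add: prod_pos)
    have B: "(\<Prod>k=1..m. norm (x k) ^ n k / (Pb k * fact (n k))) \<le> CB * (\<theta>^N)^(p-1) * (R / F)^p"
    proof -
      have "(\<Prod>k=1..m. norm (x k) ^ n k / (Pb k * fact (n k))) \<le>
          (\<Prod>k=1..m. CBk k * (\<theta>^(n k))^(p-1) * (r k ^ n k / fact (n k))^p)"
        by (rule prod_mono) (use Bk Pb0 in \<open>auto intro!: divide_nonneg_nonneg mult_nonneg_nonneg\<close>)
      also have "\<dots> = CB * (\<theta>^N)^(p-1) * (R / F)^p"
        unfolding CB_def N_def R_def F_def
        by (simp add: prod.distrib prod_power_distrib prod_dividef power_sum power_divide)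
      finally show ?thesis .
    qed
    have M: "fact N * R \<le> s ^ N * F"
      unfolding N_def R_def F_def s_def by (rule multinom_le) (use r0 in auto)
    have RF: "R / F \<le> s ^ N / fact N"
      using M F0 by (simp add: field_simps)
    have RF0: "R / F \<ge> 0" unfolding R_def using F0 r0 by (simp add: prod_nonneg)
    have "norm (FC_term p m a b x n) \<le> (CA * fact N ^ p * (\<theta>^N)^p) * (CB * (\<theta>^N)^(p-1) * (R / F)^p)"
      unfolding normT
      by (rule mult_mono[OF A B]) (use CA0 th1 Pb0 in \<open>auto intro!: prod_nonneg divide_nonneg_nonneg mult_nonneg_nonneg\<close>)
    also have "\<dots> \<le> (CA * fact N ^ p * (\<theta>^N)^p) * (CB * (\<theta>^N)^(p-1) * (s ^ N / fact N)^p)"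
      using RF RF0 CA0 CB0 th1 by (intro mult_left_mono mult_right_mono power_mono) auto
    also have "\<dots> = C * ((\<theta>^N)^p * (\<theta>^N)^(p-1)) * (s^N)^p"
      unfolding C_def by (simp add: power_divide field_simps)
    also have "\<dots> = C * Q ^ N"
      unfolding Q_def t_def power_add[symmetric] epe
      by (simp add: power_mult_distrib power_mult[symmetric] mult.commute)
    also have "\<dots> = C * (\<Prod>k=1..m. Q ^ n k)" unfolding N_def by (simp add: power_sum)
    finally show ?thesis .
  qed
  have "(\<lambda>n. C * (\<Prod>k=1..m. Q ^ n k)) summable_on multi_idx m"
    unfolding multi_idx_def by (rule summable_on_cmult_right) (rule geom_multi_summable[OF Q0 Q1])
  thus ?thesis by (rule summable_on_comparison_test) (use bound in auto)
qed

end
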